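(* Let $G$ be the direct sum of $\omega$ copies of $\mathbb{Z}_2$, endowed with the topology $\tau$ induced from the Tikhonov product topology of $\mathbb{Z}_2^{\omega}$. Then $\operatorname{asdim}(G,\mathcal{C}_\tau)=\infty$.
   Context: $\mathcal{C}_\tau$ is the group ideal of precompact subsets (subsets with compact closure in $G$) of $(G,\tau)$; it defines the coarse structure on $G$ with base $\{\{(x,y):x\in A+y\}:A\in\mathcal{C}_\tau\}$. For an entourage $E$, $E[x]=\{y:(x,y)\in E\}$, $E[A]=\bigcup_{a\in A}E[a]$. $\operatorname{asdim}(X,\mathcal{E})\ge n$ means: for each $E\in\mathcal{E}$ there exist $F\in\mathcal{E}$ and a covering $\mathcal{M}$ of $X$ with each member contained in some $F[x]$, partitioned as $\mathcal{M}_0\cup\dots\cup\mathcal{M}_n$ with each $\mathcal{M}_i$ $E$-disjoint ($E[A]\cap E[B]=\emptyset$ for distinct $A,B\in\mathcal{M}_i$); $\operatorname{asdim}=\infty$ if this holds for every $n$. *)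

theory Defs
  imports "HOL-Analysis.Analysis"
begin

text \<open>The group G = direct sum of omega copies of Z_2: finitely supported
  sequences nat => bool, with pointwise addition mod 2 (xor).\<close>

definition Gsum :: "(nat \<Rightarrow> bool) set" where
  "Gsum = {x. finite {i. x i}}"

definition gadd :: "(nat \<Rightarrow> bool) \<Rightarrow> (nat \<Rightarrow> bool) \<Rightarrow> (nat \<Rightarrow> bool)" where
  "gadd x y = (\<lambda>i. x i \<noteq> y i)"

definition tau :: "(nat \<Rightarrow> bool) topology" where
  "tau = subtopology (product_topology (\<lambda>_::nat. discrete_topology (UNIV::bool set)) UNIV) Gsum"

definition precompact_tau :: "(nat \<Rightarrow> bool) set \<Rightarrow> bool" where
  "precompact_tau A \<longleftrightarrow> A \<subseteq> Gsum \<and> compactin tau (tau closure_of A)"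

definition coarse_C_tau :: "((nat \<Rightarrow> bool) \<times> (nat \<Rightarrow> bool)) set set" where
  "coarse_C_tau = {E. E \<subseteq> Gsum \<times> Gsum \<and>
      (\<exists>A. precompact_tau A \<and>
           E \<subseteq> {(x,y). x \<in> Gsum \<and> y \<in> Gsum \<and> x \<in> (\<lambda>a. gadd a y) ` A})}"

definition asdim_le :: "'a set \<Rightarrow> ('a \<times> 'a) set set \<Rightarrow> nat \<Rightarrow> bool" where
  "asdim_le X Ent n \<longleftrightarrow>
    (\<forall>E\<in>Ent. \<exists>F\<in>Ent. \<exists>\<M> (c :: 'a set \<Rightarrow> nat).
        \<Union>\<M> = X \<and>
        (\<forall>M\<in>\<M>. \<exists>x\<in>X. M \<subseteq> F `` {x}) \<and>
        (\<forall>M\<in>\<M>. c M \<le> n) \<and>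
        (\<forall>M\<in>\<M>. \<forall>M'\<in>\<M>. M \<noteq> M' \<and> c M = c M' \<longrightarrow> E `` M \<inter> E `` M' = {}))"

definition asdim_infinite :: "'a set \<Rightarrow> ('a \<times> 'a) set set \<Rightarrow> bool" where
  "asdim_infinite X Ent \<longleftrightarrow> (\<forall>n. \<not> asdim_le X Ent n)"

end

theory Submission
  imports Defs
begin

abbreviation PT :: "(nat \<Rightarrow> bool) topology" where
  "PT \<equiv> product_topology (\<lambda>_::nat. discrete_topology (UNIV::bool set)) UNIV"

lemma topspace_PT [simp]: "topspace PT = UNIV"
  by (auto simp: topspace_product_topology PiE_def extensional_def)

lemma topspace_tau [simp]: "topspace tau = Gsum"
  by (simp add: tau_def)

lemma compact_PT: "compact_space PT"
  by (simp add: compact_space_product_topology compact_space_discrete_topology)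

lemma open_coord: "openin PT {y. \<not> y k}"
proof -
  have "openin PT {x \<in> topspace PT. x k \<in> {False}}"
    by (rule openin_continuous_map_preimage[OF continuous_map_product_projection]) auto
  then show ?thesis by (simp add: Collect_neg_eq)
qed

lemma closed_coord: "closedin PT {y. \<not> y k}"
proof -
  have "closedin PT {x \<in> topspace PT. x k \<in> {False}}"
    by (rule closedin_continuous_map_preimage[OF continuous_map_product_projection]) auto
  then show ?thesis by (simp add: Collect_neg_eq)
qed

lemma compact_pairs:
  fixes t :: "nat \<Rightarrow> nat"
  assumes D: "compactin PT D" "D \<subseteq> Gsum" and t: "inj t"
  shows "\<exists>K. \<forall>a\<in>D. \<forall>b\<in>D. \<exists>k\<le>K. \<not> a (t k) \<and> \<not> b (t k)"
proof -
  let ?U = "\<lambda>k. {y. \<not> y (t k)} \<times> {y. \<not> y (t k)}"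
  have cD: "compactin (prod_topology PT PT) (D \<times> D)"
    using D by (simp add: compactin_Times)
  have op: "\<forall>B\<in>range ?U. openin (prod_topology PT PT) B"
    using open_coord by (auto simp: openin_prod_Times_iff)
  have cov: "D \<times> D \<subseteq> \<Union>(range ?U)"
  proof
    fix z assume "z \<in> D \<times> D"
    then obtain a b where z: "z = (a,b)" "a \<in> Gsum" "b \<in> Gsum" using D by auto
    have fin: "finite (t -` ({i. a i} \<union> {i. b i}))"
      using z t by (intro finite_vimageI) (auto simp: Gsum_def inj_on_def)
    obtain k where "k \<notin> t -` ({i. a i} \<union> {i. b i})"
      using ex_new_if_finite[OF infinite_UNIV_nat fin] by (elim exE)
    then show "z \<in> \<Union>(range ?U)" using z by auto
  qed
  have H: "\<forall>\<U>. (\<forall>U\<in>\<U>. openin (prod_topology PT PT) U) \<and> D \<times> D \<subseteq> \<Union> \<U> \<longrightarrow>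
        (\<exists>\<F>. finite \<F> \<and> \<F> \<subseteq> \<U> \<and> D \<times> D \<subseteq> \<Union> \<F>)"
    using cD unfolding compactin_def by (rule conjunct2)
  have "\<exists>\<F>. finite \<F> \<and> \<F> \<subseteq> range ?U \<and> D \<times> D \<subseteq> \<Union> \<F>"
    using H op cov by (rule_tac mp[OF spec[OF H, of "range ?U"]]) (simp add: op cov)
  then obtain F where F: "finite F" "F \<subseteq> range ?U" "D \<times> D \<subseteq> \<Union>F"
    by blast
  obtain I where I: "finite I" "F = ?U ` I"
    using finite_subset_image[OF F(1,2)] by auto
  obtain K where K: "I \<subseteq> {..<K}" using finite_nat_bounded[OF I(1)] by auto
  show ?thesis
  proof (rule exI[of _ K], intro ballI)
    fix a b assume "a \<in> D" "b \<in> D"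
    then have "(a,b) \<in> \<Union>F" using F by auto
    then obtain k where "k \<in> I" "(a,b) \<in> ?U k" using I by auto
    then show "\<exists>k\<le>K. \<not> a (t k) \<and> \<not> b (t k)" using K by (auto intro!: exI[of _ k])
  qed
qed

definition Wt :: "nat \<Rightarrow> (nat \<Rightarrow> bool) set" where
  "Wt m = {a. finite {i. a i} \<and> card {i. a i} \<le> m}"

lemma Wt_eq: "Wt m = \<Inter> ((\<lambda>J. \<Union>j\<in>J. {y::nat\<Rightarrow>bool. \<not> y j}) ` {J::nat set. finite J \<and> card J = Suc m})"
proof (intro equalityI subsetI)
  fix a assume a: "a \<in> Wt m"
  show "a \<in> \<Inter> ((\<lambda>J. \<Union>j\<in>J. {y::nat\<Rightarrow>bool. \<not> y j}) ` {J::nat set. finite J \<and> card J = Suc m})"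
  proof (rule InterI, clarify)
    fix J :: "nat set" assume J0: "finite J" "card J = Suc m"
    show "a \<in> (\<Union>j\<in>J. {y. \<not> y j})"
    proof (rule ccontr)
    assume "a \<notin> (\<Union>j\<in>J. {y. \<not> y j})"
    then have "J \<subseteq> {i. a i}" by blast
    moreover have "finite {i. a i}" "card {i. a i} \<le> m" using a unfolding Wt_def by auto
    ultimately have "card J \<le> m" using card_mono by (meson order_trans)
    then show False using J0 by simp
    qed
  qed
next
  fix a assume a: "a \<in> \<Inter> ((\<lambda>J. \<Union>j\<in>J. {y::nat\<Rightarrow>bool. \<not> y j}) ` {J::nat set. finite J \<and> card J = Suc m})"
  show "a \<in> Wt m"
  proof (rule ccontr)
    assume "a \<notin> Wt m"
    then have "\<exists>J. finite J \<and> card J = Suc m \<and> J \<subseteq> {i. a i}"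
    proof (cases "finite {i. a i}")
      case True
      then have "Suc m \<le> card {i. a i}" using \<open>a \<notin> Wt m\<close> by (auto simp: Wt_def)
      then obtain T where "T \<subseteq> {i. a i}" "card T = Suc m" "finite T"
        by (rule obtain_subset_with_card_n)
      then show ?thesis by blast
    next
      case False then show ?thesis using infinite_arbitrarily_large by blast
    qed
    then obtain J where J: "finite J" "card J = Suc m" "J \<subseteq> {i. a i}" by blast
    then have "a \<in> (\<Union>j\<in>J. {y::nat\<Rightarrow>bool. \<not> y j})" using a by blast
    then show False using J by blast
  qed
qed

lemma Wt_closed: "closedin PT (Wt m)"
proof -
  have ne: "{J::nat set. finite J \<and> card J = Suc m} \<noteq> {}"
  proof -
    obtain B :: "nat set" where "finite B \<and> card B = Suc m"
      using infinite_arbitrarily_large[OF infinite_UNIV_nat, of "Suc m"] by blast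
    then show ?thesis by blast
  qed
  show ?thesis unfolding Wt_eq
  proof (rule closedin_Inter)
    show "(\<lambda>J. \<Union>j\<in>J. {y::nat\<Rightarrow>bool. \<not> y j}) ` {J::nat set. finite J \<and> card J = Suc m} \<noteq> {}"
      using ne by blast
  next
    fix S assume "S \<in> (\<lambda>J. \<Union>j\<in>J. {y::nat\<Rightarrow>bool. \<not> y j}) ` {J::nat set. finite J \<and> card J = Suc m}"
    then obtain J :: "nat set" where J: "finite J" "S = (\<Union>j\<in>J. {y::nat\<Rightarrow>bool. \<not> y j})" by blast
    show "closedin PT S" unfolding J(2)
    proof (rule closedin_Union)
      show "finite ((\<lambda>j. {y::nat\<Rightarrow>bool. \<not> y j}) ` J)" using J(1) by simp
    next
      fix T assume "T \<in> (\<lambda>j. {y::nat\<Rightarrow>bool. \<not> y j}) ` J"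
      then show "closedin PT T" using closed_coord by blast
    qed
  qed
qed

lemma Wt_Gsum: "Wt m \<subseteq> Gsum" by (auto simp: Wt_def Gsum_def)

lemma Wt_precompact: "precompact_tau (Wt m)"
proof -
  have "closedin tau (Wt m)" unfolding tau_def closedin_subtopology
    using Wt_closed Wt_Gsum by blast
  then have "tau closure_of (Wt m) = Wt m" by (simp add: closure_of_eq)
  moreover have "compactin tau (Wt m)" unfolding tau_def compactin_subtopology
    using Wt_Gsum closedin_compact_space[OF compact_PT Wt_closed] by blast
  ultimately show ?thesis using Wt_Gsum by (simp add: precompact_tau_def)
qed


definition emb :: "nat \<Rightarrow> (nat \<Rightarrow> nat) \<Rightarrow> (nat \<Rightarrow> bool)" where
  "emb N x = (\<lambda>j. j div N < x (j mod N))"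

definition near :: "nat \<Rightarrow> nat \<Rightarrow> (nat \<Rightarrow> nat) \<Rightarrow> (nat \<Rightarrow> nat) \<Rightarrow> bool" where
  "near N d x y \<longleftrightarrow> (\<forall>i<N. x i \<le> y i + d \<and> y i \<le> x i + d)"

lemma emb_Gsum:
  assumes "0 < N" "\<forall>i<N. x i \<le> p"
  shows "emb N x \<in> Gsum"
proof -
  have "{j. emb N x j} \<subseteq> {..<p*N}"
  proof
    fix j assume "j \<in> {j. emb N x j}"
    then have "j div N < x (j mod N)" by (simp add: emb_def)
    moreover have "x (j mod N) \<le> p" using assms by simp
    ultimately have "j div N < p" by linarith
    then show "j \<in> {..<p*N}" using assms(1) by (simp add: div_less_iff_less_mult)
  qed
  then show ?thesis unfolding Gsum_def using finite_subset by blast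
qed

lemma gadd_cancel: "gadd (gadd u v) v = u"
  by (auto simp: gadd_def)

lemma gadd_zero: "gadd (\<lambda>_. False) v = v"
  by (auto simp: gadd_def)

lemma zero_Wt: "(\<lambda>_. False) \<in> Wt m"
  by (simp add: Wt_def)

lemma emb_near:
  assumes N: "0 < N" and nr: "near N 2 x y"
  shows "gadd (emb N x) (emb N y) \<in> Wt (2*N)"
proof -
  let ?g = "\<lambda>(i,d). (min (x i) (y i) + d) * N + i"
  have sub: "{j. gadd (emb N x) (emb N y) j} \<subseteq> ?g ` ({..<N} \<times> {..<2})"
  proof
    fix j assume "j \<in> {j. gadd (emb N x) (emb N y) j}"
    then have dj: "(j div N < x (j mod N)) \<noteq> (j div N < y (j mod N))"
      by (simp add: gadd_def emb_def)
    define i where "i = j mod N"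
    define k where "k = j div N"
    have iN: "i < N" using N by (simp add: i_def)
    have b: "x i \<le> y i + 2" "y i \<le> x i + 2" using nr iN by (auto simp: near_def)
    have k1: "min (x i) (y i) \<le> k" "k < min (x i) (y i) + 2"
      using dj b unfolding i_def[symmetric] k_def[symmetric] by auto
    have jeq: "j = k * N + i" by (simp add: i_def k_def)
    show "j \<in> ?g ` ({..<N} \<times> {..<2})"
      by (rule image_eqI[of _ _ "(i, k - min (x i) (y i))"]) (use k1 jeq iN in auto)
  qed
  have fin: "finite (?g ` ({..<N} \<times> {..<2}))" by simp
  have "card (?g ` ({..<N} \<times> {..<2})) \<le> card ({..<N} \<times> {..<(2::nat)})"
    by (rule card_image_le) simp
  also have "\<dots> = 2*N" by (simp add: card_cartesian_product)
  finally have "card {j. gadd (emb N x) (emb N y) j} \<le> 2*N"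
    using card_mono[OF fin sub] by linarith
  then show ?thesis using finite_subset[OF sub fin] by (simp add: Wt_def)
qed

definition EE :: "nat \<Rightarrow> ((nat \<Rightarrow> bool) \<times> (nat \<Rightarrow> bool)) set" where
  "EE m = {(x,y). x \<in> Gsum \<and> y \<in> Gsum \<and> x \<in> (\<lambda>a. gadd a y) ` Wt m}"

lemma EE_in: "EE m \<in> coarse_C_tau"
  unfolding coarse_C_tau_def EE_def using Wt_precompact by blast

lemma EE_mem:
  assumes "u \<in> Gsum" "v \<in> Gsum" "gadd u v \<in> Wt m"
  shows "(u, v) \<in> EE m"
  using assms gadd_cancel[of u v] unfolding EE_def by (auto intro!: image_eqI[of _ _ "gadd u v"])

lemma EE_refl:
  assumes "v \<in> Gsum" shows "(v, v) \<in> EE m"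
  using assms gadd_zero[of v] zero_Wt[of m] unfolding EE_def by (auto intro!: image_eqI[of _ _ "\<lambda>_. False"])


lemma hex:
  fixes col :: "(nat \<Rightarrow> nat) \<Rightarrow> nat" and P :: "(nat \<Rightarrow> nat) \<Rightarrow> 'm"
  assumes N: "0 < N" and p: "p = K + 3"
    and col_lt: "\<And>x. \<forall>i<N. x i \<le> p \<Longrightarrow> col x < N"
    and same: "\<And>x y. \<forall>i<N. x i \<le> p \<Longrightarrow> \<forall>i<N. y i \<le> p \<Longrightarrow> near N 2 x y \<Longrightarrow> col x = col y \<Longrightarrow> P x = P y"
    and bnd: "\<And>x z i. \<forall>i<N. x i \<le> p \<Longrightarrow> \<forall>i<N. z i \<le> p \<Longrightarrow> i < N \<Longrightarrow> P x = P z \<Longrightarrow> z i \<le> 1 \<Longrightarrow> x i \<le> K + 1"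
  shows False
proof -
  define grid where "grid x \<longleftrightarrow> (\<forall>i<N. x i \<le> p)" for x :: "nat \<Rightarrow> nat"
  define R where "R j = {(x,y). grid x \<and> grid y \<and> col x = j \<and> col y = j \<and> near N 2 x y}" for j
  define W where "W j = {x. \<exists>z. grid z \<and> col z = j \<and> z j \<le> 1 \<and> (z,x) \<in> (R j)\<^sup>*}" for j
  define label where "label x i = (if x i = 0 \<or> (\<exists>w\<in>W i. near N 1 x w) then (0::nat) else 1)" for x i
  have chain: "grid x \<and> col x = j \<and> P x = P z" if "(z,x) \<in> (R j)\<^sup>*" "grid z" "col z = j" for z x j
    using that(1)
  proof (induction rule: rtrancl_induct)
    case base then show ?case using that by simp
  next
    case (step y x)
    then have "grid y" "grid x" "col x = j" "col y = j" "near N 2 y x" by (auto simp: R_def)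
    then have "P y = P x" using same unfolding grid_def by blast
    then show ?case using step \<open>grid x\<close> \<open>col x = j\<close> by simp
  qed
  have Wb: "x j \<le> K + 1" if xW: "x \<in> W j" and jN0: "j < N" for x j
  proof -
    obtain z where z: "grid z" "col z = j" "z j \<le> 1" "(z,x) \<in> (R j)\<^sup>*"
      using xW unfolding W_def by blast
    then have "grid x" "P x = P z" using chain by blast+
    then show ?thesis using bnd[of x z j] z jN0 unfolding grid_def by blast
  qed
  have Wg: "grid x \<and> col x = j" if "x \<in> W j" for x j
    using that chain unfolding W_def by blast
  have l1: "\<forall>x. (\<forall>i<N. x i \<le> p) \<longrightarrow> (\<forall>i<N. label x i = 0 \<or> label x i = 1)"
    by (simp add: label_def)
  have l2: "\<forall>x. (\<forall>i<N. x i \<le> p) \<longrightarrow> (\<forall>i<N. x i = 0 \<longrightarrow> label x i = 0)"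
    by (simp add: label_def)
  have l3: "\<forall>x. (\<forall>i<N. x i \<le> p) \<longrightarrow> (\<forall>i<N. x i = p \<longrightarrow> label x i = 1)"
  proof (intro allI impI)
    fix x i assume x: "\<forall>i<N. x i \<le> p" and i: "i < N" and xp: "x i = p"
    have "\<not> near N 1 x w" if "w \<in> W i" for w
    proof
      assume "near N 1 x w"
      then have "x i \<le> w i + 1" using i by (simp add: near_def)
      moreover have "w i \<le> K + 1" using Wb that i by blast
      ultimately show False using xp p by simp
    qed
    then show "label x i = 1" using xp p by (auto simp: label_def)
  qed
  have pos: "0 < p" using p by simp
  obtain q where q: "\<forall>i<N. q i < p"
    and cell: "\<forall>i<N. \<exists>r s. (\<forall>j<N. q j \<le> r j \<and> r j \<le> q j + 1) \<and> (\<forall>j<N. q j \<le> s j \<and> s j \<le> q j + 1) \<and> label r i \<noteq> label s i"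
    using kuhn_lemma[OF pos l1 l2 l3] by blast
  have gq: "grid q" using q unfolding grid_def by (simp add: less_imp_le)
  define j where "j = col q"
  have jN: "j < N" using col_lt gq unfolding grid_def j_def by blast
  have cellg: "grid u" if "\<forall>i<N. q i \<le> u i \<and> u i \<le> q i + 1" for u
    unfolding grid_def
  proof (intro allI impI)
    fix i assume "i < N"
    then have "u i \<le> q i + 1" "q i < p" using that q by auto
    then show "u i \<le> p" by linarith
  qed
  have qW: "q \<in> W j" if u: "\<forall>i<N. q i \<le> u i \<and> u i \<le> q i + 1" and lu: "label u j = 0" for u
  proof -
    have "u j = 0 \<or> (\<exists>w\<in>W j. near N 1 u w)" using lu by (auto simp: label_def split: if_splits)
    then show ?thesis
    proof
      assume "u j = 0"
      then have "q j \<le> 1" using u jN by force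
      then show ?thesis unfolding W_def using gq j_def by blast
    next
      assume "\<exists>w\<in>W j. near N 1 u w"
      then obtain w where w: "w \<in> W j" "near N 1 u w" by blast
      obtain z where z: "grid z" "col z = j" "z j \<le> 1" "(z,w) \<in> (R j)\<^sup>*"
        using w(1) unfolding W_def by blast
      have "grid w" "col w = j" using Wg w(1) by blast+
      moreover have "near N 2 w q" using w(2) u unfolding near_def by force
      ultimately have "(w,q) \<in> R j" using gq unfolding R_def j_def by simp
      then have "(z,q) \<in> (R j)\<^sup>*" using z(4) by simp
      then show ?thesis unfolding W_def using z by blast
    qed
  qed
  obtain r s where r: "\<forall>i<N. q i \<le> r i \<and> r i \<le> q i + 1" and s: "\<forall>i<N. q i \<le> s i \<and> s i \<le> q i + 1"
    and lrs: "label r j \<noteq> label s j"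
    using cell jN by blast
  have "q \<in> W j"
  proof (cases "label r j = 0")
    case True then show ?thesis using qW r by blast
  next
    case False
    then have "label s j = 0" using lrs label_def by (auto split: if_splits)
    then show ?thesis using qW s by blast
  qed
  have "label v j = 0" if "\<forall>i<N. q i \<le> v i \<and> v i \<le> q i + 1" for v
  proof -
    have "near N 1 v q" using that unfolding near_def by force
    then show ?thesis using \<open>q \<in> W j\<close> by (auto simp: label_def)
  qed
  then show False using r s lrs by simp
qed

theorem mainTheorem11:
  shows "asdim_infinite Gsum coarse_C_tau"
  unfolding asdim_infinite_def
proof (intro allI notI)
  fix n assume A: "asdim_le Gsum coarse_C_tau n"
  define N where "N = Suc n"
  have N0: "0 < N" by (simp add: N_def)
  have "\<exists>F\<in>coarse_C_tau. \<exists>\<M> (c :: (nat \<Rightarrow> bool) set \<Rightarrow> nat).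
        \<Union>\<M> = Gsum \<and>
        (\<forall>M\<in>\<M>. \<exists>x\<in>Gsum. M \<subseteq> F `` {x}) \<and>
        (\<forall>M\<in>\<M>. c M \<le> n) \<and>
        (\<forall>M\<in>\<M>. \<forall>M'\<in>\<M>. M \<noteq> M' \<and> c M = c M' \<longrightarrow> EE (2*N) `` M \<inter> EE (2*N) `` M' = {})"
    using A EE_in[of "2*N"] unfolding asdim_le_def by (rule bspec)
  then obtain F \<M> and c :: "(nat \<Rightarrow> bool) set \<Rightarrow> nat" where F: "F \<in> coarse_C_tau"
    and cov: "\<Union>\<M> = Gsum" and bd: "\<forall>M\<in>\<M>. \<exists>x\<in>Gsum. M \<subseteq> F `` {x}"
    and cl: "\<forall>M\<in>\<M>. c M \<le> n"
    and dj: "\<forall>M\<in>\<M>. \<forall>M'\<in>\<M>. M \<noteq> M' \<and> c M = c M' \<longrightarrow> EE (2*N) `` M \<inter> EE (2*N) `` M' = {}"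
    by (elim bexE exE conjE) (rule that, assumption+)
  obtain AF where AF: "precompact_tau AF"
    and FA: "F \<subseteq> {(x,y). x \<in> Gsum \<and> y \<in> Gsum \<and> x \<in> (\<lambda>a. gadd a y) ` AF}"
    using F unfolding coarse_C_tau_def by blast
  define D where "D = tau closure_of AF"
  have cD: "compactin tau D" using AF by (simp add: precompact_tau_def D_def)
  then have Dc: "compactin PT D" "D \<subseteq> Gsum" unfolding tau_def compactin_subtopology by auto
  have AD: "AF \<subseteq> D" unfolding D_def
    by (rule closure_of_subset) (use AF in \<open>simp add: precompact_tau_def\<close>)
  have "\<forall>i. \<exists>Ki. i < N \<longrightarrow> (\<forall>a\<in>D. \<forall>b\<in>D. \<exists>k\<le>Ki. \<not> a (N * Suc k + i) \<and> \<not> b (N * Suc k + i))"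
  proof
    fix i
    have "inj (\<lambda>k. N * Suc k + i)" by (rule injI) (use N0 in simp)
    then show "\<exists>Ki. i < N \<longrightarrow> (\<forall>a\<in>D. \<forall>b\<in>D. \<exists>k\<le>Ki. \<not> a (N * Suc k + i) \<and> \<not> b (N * Suc k + i))"
      using compact_pairs[OF Dc] by blast
  qed
  then obtain Kf where Kf: "\<And>i. i < N \<Longrightarrow> (\<forall>a\<in>D. \<forall>b\<in>D. \<exists>k\<le>Kf i. \<not> a (N * Suc k + i) \<and> \<not> b (N * Suc k + i))"
    by metis
  define K where "K = (\<Sum>i<N. Kf i)"
  have KfK: "Kf i \<le> K" if "i < N" for i
    unfolding K_def by (rule member_le_sum) (use that in auto)
  define p where "p = K + 3"
  define Mof where "Mof x = (SOME M. M \<in> \<M> \<and> emb N x \<in> M)" for x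
  have Mof: "Mof x \<in> \<M> \<and> emb N x \<in> Mof x" if "\<forall>i<N. x i \<le> p" for x
  proof -
    have "emb N x \<in> \<Union>\<M>" using emb_Gsum[OF N0 that] cov by simp
    then have "\<exists>M. M \<in> \<M> \<and> emb N x \<in> M" by blast
    then show ?thesis unfolding Mof_def by (rule someI_ex)
  qed
  define col where "col x = c (Mof x)" for x
  show False
  proof (rule hex[of N p K col Mof])
    show "0 < N" by (rule N0)
    show "p = K + 3" by (simp add: p_def)
  next
    fix x assume "\<forall>i<N. x i \<le> p"
    then show "col x < N" using Mof cl unfolding col_def N_def by (meson le_imp_less_Suc)
  next
    fix x y assume gx: "\<forall>i<N. x i \<le> p" and gy: "\<forall>i<N. y i \<le> p" and nr: "near N 2 x y"
      and cc: "col x = col y"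
    show "Mof x = Mof y"
    proof (rule ccontr)
      assume ne: "Mof x \<noteq> Mof y"
      have mx: "Mof x \<in> \<M>" "emb N x \<in> Mof x" using Mof[OF gx] by auto
      have my: "Mof y \<in> \<M>" "emb N y \<in> Mof y" using Mof[OF gy] by auto
      have ex: "emb N x \<in> Gsum" "emb N y \<in> Gsum" using emb_Gsum[OF N0] gx gy by auto
      have "(emb N x, emb N y) \<in> EE (2*N)"
        by (rule EE_mem[OF ex emb_near[OF N0 nr]])
      then have "emb N y \<in> EE (2*N) `` Mof x" using mx by blast
      moreover have "emb N y \<in> EE (2*N) `` Mof y" using my EE_refl[OF ex(2)] by blast
      moreover have "EE (2*N) `` Mof x \<inter> EE (2*N) `` Mof y = {}"
        using dj mx(1) my(1) ne cc unfolding col_def by blast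
      ultimately show False by blast
    qed
  next
    fix x z i assume gx: "\<forall>i<N. x i \<le> p" and gz: "\<forall>i<N. z i \<le> p" and iN: "i < N"
      and eq: "Mof x = Mof z" and zi: "z i \<le> 1"
    have mx: "Mof x \<in> \<M>" "emb N x \<in> Mof x" using Mof[OF gx] by auto
    have mz: "emb N z \<in> Mof x" using Mof[OF gz] eq by auto
    obtain w where w: "w \<in> Gsum" "Mof x \<subseteq> F `` {w}" using bd mx(1) by blast
    have "(w, emb N z) \<in> F" "(w, emb N x) \<in> F" using w mx mz by auto
    then obtain a b where ab: "a \<in> AF" "w = gadd a (emb N z)" "b \<in> AF" "w = gadd b (emb N x)"
      using FA by blast
    obtain k where k: "k \<le> Kf i" "\<not> a (N * Suc k + i)" "\<not> b (N * Suc k + i)"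
      using Kf[OF iN] ab AD by blast
    have e1: "N * Suc k + i = i + N * Suc k" by simp
    have dv: "(N * Suc k + i) div N = Suc k" "(N * Suc k + i) mod N = i"
      unfolding e1 using iN N0 by (simp_all only: div_mult_self2 mod_mult_self2 div_less mod_less neq0_conv)
    have "w (N * Suc k + i) = (Suc k < z i)"
      using ab(2) k(2) dv by (simp add: gadd_def emb_def)
    moreover have "w (N * Suc k + i) = (Suc k < x i)"
      using ab(4) k(3) dv by (simp add: gadd_def emb_def)
    ultimately have "x i \<le> Suc k" using zi by auto
    then show "x i \<le> K + 1" using k(1) KfK[OF iN] by simp
  qed
qed

end
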